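(* Let $p\equiv 2 \pmod 3$ be prime. With $a_t(p) = -\sum_{x \bmod p}\left(\frac{x^3+tx^2+1}{p}\right)$, one has $\sum_{t \bmod p} a_t(p)^2 = p^2-p-1$.
   Context: $\left(\frac{\cdot}{p}\right)$ denotes the Legendre symbol (equal to $0$ at multiples of $p$). *)

theory Defs
  imports "HOL-Number_Theory.Number_Theory"
begin

definition a_coef :: "int \<Rightarrow> int \<Rightarrow> int" where
  "a_coef p t = - (\<Sum>x\<in>{0..<p}. Legendre (x^3 + t * x^2 + 1) p)"

end

theory Submission
  imports Defs
begin

locale oddprime =
  fixes p :: int
  assumes prime_p: "prime p" and p_gt2: "p > 2"
begin

lemma p_pos: "p > 0" using p_gt2 by simp

lemma leg_cong:
  assumes "[a = b] (mod p)"
  shows "Legendre a p = Legendre b p"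
proof -
  have "[a = 0] (mod p) \<longleftrightarrow> [b = 0] (mod p)"
    using assms cong_sym cong_trans by blast
  moreover have "QuadRes p a \<longleftrightarrow> QuadRes p b"
    unfolding QuadRes_def using assms cong_sym cong_trans by blast
  ultimately show ?thesis unfolding Legendre_def by simp
qed

lemma leg_mod: "Legendre (a mod p) p = Legendre a p"
  by (rule leg_cong) simp

lemma leg_vals: "Legendre a p \<in> {-1, 0, 1}"
  unfolding Legendre_def by auto

lemma leg_zero_iff: "Legendre a p = 0 \<longleftrightarrow> p dvd a"
  unfolding Legendre_def by (auto simp: cong_0_iff)

definition k where "k = nat ((p - 1) div 2)"

lemma euler_int: "[Legendre a p = a ^ k] (mod p)"
proof -
  have pr: "prime (nat p)" using prime_p by simp
  have "nat p > 2" using p_gt2 by simp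
  from euler_criterion[OF pr this, of a]
  have "[Legendre a (int (nat p)) = a ^ ((nat p - 1) div 2)] (mod int (nat p))" .
  moreover have "(nat p - 1) div 2 = k" unfolding k_def using p_gt2 by (simp add: nat_div_distrib nat_diff_distrib)
  ultimately show ?thesis using p_gt2 by simp
qed

lemma vals_cong_eq:
  assumes "x \<in> {-1,0,1::int}" "y \<in> {-1,0,1}" "[x = y] (mod p)"
  shows "x = y"
proof -
  have "p dvd (x - y)" using assms(3) by (simp add: cong_iff_dvd_diff)
  moreover have "\<bar>x - y\<bar> < p" using assms(1,2) p_gt2 by auto
  ultimately show ?thesis
  proof (cases "x = y")
    case False
    then have "\<bar>p\<bar> \<le> \<bar>x - y\<bar>" using dvd_imp_le_int[of "x-y" p] \<open>p dvd (x - y)\<close> by simp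
    then show ?thesis using \<open>\<bar>x - y\<bar> < p\<close> by simp
  qed
qed

lemma leg_mult: "Legendre (a * b) p = Legendre a p * Legendre b p"
proof -
  have "[Legendre (a*b) p = (a*b) ^ k] (mod p)" by (rule euler_int)
  also have "(a*b)^k = a^k * b^k" by (simp add: power_mult_distrib)
  also have "[a^k * b^k = Legendre a p * Legendre b p] (mod p)"
    using euler_int cong_mult cong_sym by blast
  finally have c: "[Legendre (a*b) p = Legendre a p * Legendre b p] (mod p)" .
  have "Legendre a p * Legendre b p \<in> {-1,0,1}" using leg_vals[of a] leg_vals[of b] by auto
  then show ?thesis using vals_cong_eq[OF leg_vals _ c] by blast
qed

lemma leg_sq: "\<not> p dvd a \<Longrightarrow> Legendre (a^2) p = 1"
proof -
  assume a: "\<not> p dvd a"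
  have "\<not> p dvd a^2" using a prime_p by (simp add: prime_dvd_power_iff)
  then have "\<not> [a^2 = 0] (mod p)" by (simp add: cong_0_iff)
  moreover have "QuadRes p (a^2)" unfolding QuadRes_def by (rule exI[of _ a]) (rule cong_refl)
  ultimately show ?thesis unfolding Legendre_def by simp
qed

lemma leg_one: "Legendre 1 p = 1"
  using leg_sq[of 1] p_gt2 by (simp add: zdvd_not_zless)

lemma fermat_int: "\<not> p dvd a \<Longrightarrow> [a ^ (2*k) = 1] (mod p)"
proof -
  assume a: "\<not> p dvd a"
  have "[Legendre a p * Legendre a p = a^k * a^k] (mod p)" using euler_int cong_mult by blast
  moreover have "Legendre a p * Legendre a p = 1" using a leg_vals[of a] leg_zero_iff[of a] by auto
  ultimately show ?thesis by (simp add: power_add mult_2 cong_sym)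
qed

lemma two_k: "2 * int k = p - 1"
proof -
  have "odd p" using prime_odd_int prime_p p_gt2 by blast
  then obtain m where "p = 2*m+1" by (auto elim: oddE)
  then show ?thesis unfolding k_def using p_gt2 by simp
qed

lemma sum_reindex_inj:
  assumes "finite B" "inj_on \<phi> A" "\<phi> ` A \<subseteq> B" "card A = card B"
  shows "(\<Sum>x\<in>A. h (\<phi> x)) = (\<Sum>y\<in>B. h y)"
proof -
  have "card (\<phi> ` A) = card B" using card_image[OF assms(2)] assms(4) by simp
  then have "\<phi> ` A = B" using card_subset_eq[OF assms(1) assms(3)] by simp
  then show ?thesis using sum.reindex[OF assms(2), of h] by simp
qed

lemma coprime_of_ndvd: "\<not> p dvd a \<Longrightarrow> coprime a p"
  using prime_p by (metis coprime_commute prime_imp_coprime)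

lemma mod_eq_range: "0 \<le> x \<Longrightarrow> x < p \<Longrightarrow> 0 \<le> y \<Longrightarrow> y < p \<Longrightarrow> [x = y] (mod p) \<Longrightarrow> x = y"
  by (rule cong_less_imp_eq_int)

lemma lin_inj: "\<not> p dvd a \<Longrightarrow> inj_on (\<lambda>x. (a*x+b) mod p) {0..<p}"
proof (rule inj_onI)
  fix x y assume a: "\<not> p dvd a" and xy: "x \<in> {0..<p}" "y \<in> {0..<p}"
    and e: "(a*x+b) mod p = (a*y+b) mod p"
  then have "[a*x+b = a*y+b] (mod p)" by (simp add: cong_def)
  then have "[a*x = a*y] (mod p)" by (simp add: cong_add_rcancel)
  then have "[x = y] (mod p)" using cong_mult_lcancel[OF coprime_of_ndvd[OF a]] by blast
  then show "x = y" using xy mod_eq_range by auto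
qed

lemma sum_lin:
  assumes "\<not> p dvd a"
  shows "(\<Sum>x\<in>{0..<p}. h ((a*x+b) mod p)) = (\<Sum>x\<in>{0..<p}. h x)"
  by (rule sum_reindex_inj[OF _ lin_inj[OF assms]]) (use p_pos in auto)

lemma k_pos: "k \<ge> 1" and k_less: "int k < p - 1"
  using two_k p_gt2 by auto

lemma nonres: "\<exists>n. \<not> p dvd n \<and> Legendre n p = -1"
proof -
  define f where "f = (\<lambda>x::int. x^2 mod p)"
  have sub: "f ` {1..<p} \<subseteq> f ` {1..int k}"
  proof
    fix z assume "z \<in> f ` {1..<p}"
    then obtain x where x: "x \<in> {1..<p}" "z = f x" by auto
    show "z \<in> f ` {1..int k}"
    proof (cases "x \<le> int k")
      case True then show ?thesis using x by auto
    next
      case False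
      have "f (p - x) = f x" unfolding f_def
        by (simp add: power2_eq_square algebra_simps mod_eq_dvd_iff)
      moreover have "p - x \<in> {1..int k}" using False x two_k by auto
      ultimately show ?thesis using x by (metis image_eqI)
    qed
  qed
  have "card (f ` {1..<p}) \<le> card (f ` {1..int k})" using sub by (intro card_mono) auto
  also have "\<dots> \<le> card {1..int k}" by (rule card_image_le) simp
  also have "\<dots> = k" by simp
  finally have "card (f ` {1..<p}) < card {1..<p}" using k_less by simp
  then have "\<not> {1..<p} \<subseteq> f ` {1..<p}"
    using card_mono[of "f ` {1..<p}" "{1..<p}"] by auto
  then obtain y where y: "y \<in> {1..<p}" "y \<notin> f ` {1..<p}" by blast
  have ny: "\<not> p dvd y" using y(1) zdvd_not_zless by auto
  have "\<not> QuadRes p y"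
  proof
    assume "QuadRes p y"
    then obtain z where z: "[z^2 = y] (mod p)" unfolding QuadRes_def by auto
    have "[(z mod p)^2 = y] (mod p)" using z by (simp add: cong_def power_mod)
    then have fz: "f (z mod p) = y" unfolding f_def using y(1) by (simp add: cong_def)
    have "z mod p \<noteq> 0"
    proof
      assume "z mod p = 0"
      then have "[0 = y] (mod p)" using \<open>[(z mod p)^2 = y] (mod p)\<close> by simp
      then show False using ny by (metis cong_0_iff cong_sym)
    qed
    moreover have "0 \<le> z mod p" "z mod p < p" using p_pos by auto
    ultimately have zin: "z mod p \<in> {1..<p}" by auto
    show False using y(2) fz zin by force
  qed
  then show ?thesis using ny unfolding Legendre_def by (auto simp: cong_0_iff)
qed

lemma sum_leg: "(\<Sum>x\<in>{0..<p}. Legendre x p) = 0"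
proof -
  obtain n where n: "\<not> p dvd n" "Legendre n p = -1" using nonres by blast
  have "(\<Sum>x\<in>{0..<p}. Legendre x p) = (\<Sum>x\<in>{0..<p}. Legendre ((n*x+0) mod p) p)"
    using sum_lin[OF n(1), of "\<lambda>x. Legendre x p" 0] by simp
  also have "\<dots> = (\<Sum>x\<in>{0..<p}. - Legendre x p)" by (simp add: leg_mod leg_mult n(2))
  finally show ?thesis by (simp add: sum_negf)
qed

lemma sum_leg_lin: "\<not> p dvd a \<Longrightarrow> (\<Sum>x\<in>{0..<p}. Legendre (a*x+b) p) = 0"
  using sum_lin[of a "\<lambda>x. Legendre x p" b] sum_leg by (simp add: leg_mod)

lemma inv_ex: "\<not> p dvd a \<Longrightarrow> \<exists>b. [a*b = 1] (mod p)"
  using cong_solve_coprime_int[of a p] coprime_of_ndvd[of a] by simp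

lemma range_ndvd: "t \<in> {1..<p} \<Longrightarrow> \<not> p dvd t"
  using zdvd_not_zless[of t p] by simp

lemma split0: "{0..<p} = insert 0 {1..<p}" using p_pos by auto

lemma cong_by_diff: "a - b = p * m \<Longrightarrow> [a = b] (mod p)"
  by (simp add: cong_iff_dvd_diff)

lemma core: "(\<Sum>t\<in>{0..<p}. Legendre (t*(t+c)) p) = (if p dvd c then p - 1 else -1)"
proof (cases "p dvd c")
  case True
  then obtain m where m: "c = p*m" by auto
  have "(\<Sum>t\<in>{0..<p}. Legendre (t*(t+c)) p) = (\<Sum>t\<in>{1..<p}. Legendre (t*(t+c)) p)"
    unfolding split0 by (simp add: leg_zero_iff)
  also have "\<dots> = (\<Sum>t\<in>{1..<p}. 1)"
  proof (rule sum.cong[OF refl])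
    fix t assume t: "t \<in> {1..<p}"
    have "[t*(t+c) = t^2] (mod p)" by (rule cong_by_diff[of _ _ "t*m"]) (simp add: m algebra_simps power2_eq_square)
    then have "Legendre (t*(t+c)) p = Legendre (t^2) p" by (rule leg_cong)
    then show "Legendre (t*(t+c)) p = 1" using leg_sq range_ndvd[OF t] by simp
  qed
  finally show ?thesis using True p_pos by simp
next
  case False
  define iv where "iv = (\<lambda>t. SOME s. [t*s = 1] (mod p))"
  have iv: "[t * iv t = 1] (mod p)" if "t \<in> {1..<p}" for t
    unfolding iv_def using someI_ex[OF inv_ex[OF range_ndvd[OF that]]] .
  have "(\<Sum>t\<in>{0..<p}. Legendre (t*(t+c)) p) = (\<Sum>t\<in>{1..<p}. Legendre (t*(t+c)) p)"
    unfolding split0 by (simp add: leg_zero_iff)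
  also have "\<dots> = (\<Sum>t\<in>{1..<p}. Legendre ((1 + c * iv t) mod p) p)"
  proof (rule sum.cong[OF refl])
    fix t assume t: "t \<in> {1..<p}"
    obtain m where m: "t * iv t - 1 = p * m" using iv[OF t] by (auto simp: cong_iff_dvd_diff dvd_def)
    have "t*(t+c) - t^2 * (1 + c * iv t) = - c*t*(t * iv t - 1)"
      by (simp add: algebra_simps power2_eq_square)
    also have "\<dots> = p * (- c*t*m)" unfolding m by simp
    finally have "[t*(t+c) = t^2 * (1 + c * iv t)] (mod p)" by (rule cong_by_diff)
    then have "Legendre (t*(t+c)) p = Legendre (t^2 * (1 + c * iv t)) p" by (rule leg_cong)
    also have "\<dots> = Legendre (1 + c * iv t) p" unfolding leg_mult using leg_sq range_ndvd[OF t] by simp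
    finally show "Legendre (t*(t+c)) p = Legendre ((1 + c * iv t) mod p) p"
      by (simp add: leg_mod)
  qed
  also have "\<dots> = (\<Sum>y\<in>{0..<p} - {1}. Legendre y p)"
  proof (rule sum_reindex_inj[where h = "\<lambda>y. Legendre y p"])
    show "finite ({0..<p} - {1})" by simp
    show "inj_on (\<lambda>t. (1 + c * iv t) mod p) {1..<p}"
    proof (rule inj_onI)
      fix x y assume x: "x \<in> {1..<p}" and y: "y \<in> {1..<p}"
        and e: "(1 + c * iv x) mod p = (1 + c * iv y) mod p"
      then have "[1 + c * iv x = 1 + c * iv y] (mod p)" by (simp add: cong_def)
      then have "[c * iv x = c * iv y] (mod p)" by (simp add: cong_add_lcancel)
      then have e2: "[iv x = iv y] (mod p)" using cong_mult_lcancel[OF coprime_of_ndvd[OF False]] by blast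
      have "[x * (y * iv y) = y * (x * iv x)] (mod p)"
      proof -
        have "[x * (y * iv y) = y * (x * iv y)] (mod p)" by (simp add: algebra_simps)
        also have "[y * (x * iv y) = y * (x * iv x)] (mod p)"
          using e2 by (intro cong_mult cong_refl) (simp add: cong_sym)
        finally show ?thesis .
      qed
      moreover have "[x * (y * iv y) = x] (mod p)" using iv[OF y] cong_mult[OF cong_refl, of _ _ _ x] by fastforce
      moreover have "[y * (x * iv x) = y] (mod p)" using iv[OF x] cong_mult[OF cong_refl, of _ _ _ y] by fastforce
      ultimately have "[x = y] (mod p)" by (meson cong_sym cong_trans)
      then show "x = y" using x y mod_eq_range by auto
    qed
    show "(\<lambda>t. (1 + c * iv t) mod p) ` {1..<p} \<subseteq> {0..<p} - {1}"
    proof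
      fix z assume "z \<in> (\<lambda>t. (1 + c * iv t) mod p) ` {1..<p}"
      then obtain t where t: "t \<in> {1..<p}" "z = (1 + c * iv t) mod p" by auto
      have "z \<noteq> 1"
      proof
        assume "z = 1"
        then have "[1 + c * iv t = 1 + 0] (mod p)" using t p_gt2 by (simp add: cong_def)
        then have "p dvd c * iv t" by (simp add: cong_iff_dvd_diff)
        then have "p dvd iv t" using False prime_p prime_dvd_mult_iff by blast
        then have "[t * iv t = 0] (mod p)" by (simp add: cong_0_iff)
        then have "[1 = 0] (mod p)" using iv[OF t(1)] by (meson cong_sym cong_trans)
        then show False using p_gt2 by (simp add: cong_0_iff zdvd_not_zless)
      qed
      then show "z \<in> {0..<p} - {1}" using t p_pos by auto
    qed
    show "card {1..<p} = card ({0..<p} - {1})" using p_gt2 by simp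
  qed
  also have "\<dots> = (\<Sum>y\<in>{0..<p}. Legendre y p) - Legendre 1 p"
    using p_gt2 by (simp add: sum_diff1)
  finally show ?thesis using False sum_leg leg_one by simp
qed

lemma leg_modv: "Legendre ((x mod p) * ((x mod p) + d)) p = Legendre (x * (x + d)) p"
proof (rule leg_cong)
  have m: "[x mod p = x] (mod p)" by (simp add: cong_def)
  show "[(x mod p) * ((x mod p) + d) = x * (x + d)] (mod p)"
    by (intro cong_mult cong_add m cong_refl)
qed

lemma shift_sum: "(\<Sum>t\<in>{0..<p}. Legendre ((t+A)*(t+B)) p) = (if p dvd (A - B) then p - 1 else -1)"
proof -
  have "(\<Sum>t\<in>{0..<p}. Legendre ((t+A)*(t+B)) p)
      = (\<Sum>t\<in>{0..<p}. (\<lambda>s. Legendre (s * (s + (A - B))) p) ((1*t+B) mod p))"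
  proof (rule sum.cong[OF refl])
    fix t
    have "(t+A)*(t+B) = (t+B) * ((t+B) + (A - B))" by (simp add: algebra_simps)
    then show "Legendre ((t+A)*(t+B)) p = (\<lambda>s. Legendre (s * (s + (A - B))) p) ((1*t+B) mod p)"
      using leg_modv[of "t+B" "A-B"] by (simp add: mult.commute)
  qed
  also have "\<dots> = (\<Sum>t\<in>{0..<p}. Legendre (t * (t + (A - B))) p)"
    by (rule sum_lin) (use p_gt2 in \<open>simp add: zdvd_not_zless\<close>)
  finally show ?thesis using core by simp
qed

lemma inv_obtain:
  assumes "\<not> p dvd a"
  obtains a' m where "a * a' = 1 + p * m"
proof -
  obtain a' where "[a * a' = 1] (mod p)" using inv_ex[OF assms] by blast
  then have "p dvd a * a' - 1" by (simp add: cong_iff_dvd_diff)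
  then obtain m where "a * a' - 1 = p * m" by (auto elim: dvdE)
  then have "a * a' = 1 + p * m" by simp
  then show ?thesis using that by blast
qed

lemma two_lin:
  assumes al: "\<not> p dvd \<alpha>" and be: "\<not> p dvd \<beta>"
  shows "(\<Sum>t\<in>{0..<p}. Legendre ((\<alpha>*t+a)*(\<beta>*t+b)) p)
       = Legendre (\<alpha>*\<beta>) p * (if [\<alpha>*b = \<beta>*a] (mod p) then p - 1 else -1)"
proof -
  obtain \<alpha>' m1 where m1: "\<alpha> * \<alpha>' = 1 + p * m1" using inv_obtain[OF al] by blast
  obtain \<beta>' m2 where m2: "\<beta> * \<beta>' = 1 + p * m2" using inv_obtain[OF be] by blast
  define A where "A = \<alpha>' * a"
  define B where "B = \<beta>' * b"
  have "(\<Sum>t\<in>{0..<p}. Legendre ((\<alpha>*t+a)*(\<beta>*t+b)) p)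
      = (\<Sum>t\<in>{0..<p}. Legendre (\<alpha>*\<beta>) p * Legendre ((t+A)*(t+B)) p)"
  proof (rule sum.cong[OF refl])
    fix t
    have "(\<alpha>*t+a)*(\<beta>*t+b) - (\<alpha>*\<beta>) * ((t+A)*(t+B))
        = (\<alpha>*t+a)*(\<beta>*t+b) - (\<alpha>*t + (\<alpha>*\<alpha>')*a) * (\<beta>*t + (\<beta>*\<beta>')*b)"
      unfolding A_def B_def by (simp add: algebra_simps)
    also have "\<dots> = p * (- (\<alpha>*t+a)*m2*b - m1*a*(\<beta>*t + (\<beta>*\<beta>')*b))"
      unfolding m1 m2 by (simp add: algebra_simps)
    finally have "[(\<alpha>*t+a)*(\<beta>*t+b) = (\<alpha>*\<beta>) * ((t+A)*(t+B))] (mod p)" by (rule cong_by_diff)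
    then show "Legendre ((\<alpha>*t+a)*(\<beta>*t+b)) p = Legendre (\<alpha>*\<beta>) p * Legendre ((t+A)*(t+B)) p"
      using leg_cong leg_mult by metis
  qed
  also have "\<dots> = Legendre (\<alpha>*\<beta>) p * (if p dvd (A - B) then p - 1 else -1)"
    by (simp add: sum_distrib_left[symmetric] shift_sum)
  also have "p dvd (A - B) \<longleftrightarrow> [\<alpha>*b = \<beta>*a] (mod p)"
  proof -
    have nab: "\<not> p dvd \<alpha>*\<beta>" using al be prime_p prime_dvd_mult_iff by blast
    have "p dvd (A - B) \<longleftrightarrow> p dvd (\<alpha>*\<beta>) * (A - B)"
      using nab prime_p prime_dvd_mult_iff by blast
    also have "(\<alpha>*\<beta>) * (A - B) = (\<beta>*a - \<alpha>*b) + p * (\<beta>*a*m1 - \<alpha>*b*m2)"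
    proof -
      have "(\<alpha>*\<beta>) * (A - B) = \<beta>*(\<alpha>*\<alpha>')*a - \<alpha>*(\<beta>*\<beta>')*b"
        unfolding A_def B_def by (simp add: algebra_simps)
      also have "\<dots> = (\<beta>*a - \<alpha>*b) + p * (\<beta>*a*m1 - \<alpha>*b*m2)"
        unfolding m1 m2 by (simp add: algebra_simps)
      finally show ?thesis .
    qed
    also have "p dvd \<dots> \<longleftrightarrow> p dvd (\<beta>*a - \<alpha>*b)"
      by (simp add: dvd_add_left_iff)
    also have "\<dots> \<longleftrightarrow> [\<alpha>*b = \<beta>*a] (mod p)"
      by (simp add: cong_iff_dvd_diff dvd_diff_commute)
    finally show ?thesis .
  qed
  finally show ?thesis .
qed

lemma sqrt_count: "int (card {z\<in>{0..<p}. [z^2 = D] (mod p)}) = 1 + Legendre D p"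
proof (cases "p dvd D")
  case True
  have "{z\<in>{0..<p}. [z^2 = D] (mod p)} = {0}"
  proof (intro equalityI subsetI)
    fix z assume z: "z \<in> {z\<in>{0..<p}. [z^2 = D] (mod p)}"
    moreover have "[D = 0] (mod p)" using True by (simp add: cong_0_iff)
    ultimately have "[z^2 = 0] (mod p)" using cong_trans by blast
    then have "p dvd z^2" by (simp add: cong_0_iff)
    then have "p dvd z" using prime_p prime_dvd_power_iff by (metis zero_less_numeral)
    then have "[z = 0] (mod p)" by (simp add: cong_0_iff)
    then show "z \<in> {0}" using z mod_eq_range p_pos by auto
  next
    fix z assume "z \<in> {0::int}"
    then show "z \<in> {z\<in>{0..<p}. [z^2 = D] (mod p)}" using True p_pos
      by (auto simp: cong_0_iff cong_sym_eq)
  qed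
  moreover have "Legendre D p = 0" using True leg_zero_iff by simp
  ultimately show ?thesis by simp
next
  case nd: False
  show ?thesis
  proof (cases "QuadRes p D")
    case False
    have e: "{z\<in>{0..<p}. [z^2 = D] (mod p)} = {}" using False unfolding QuadRes_def by auto
    have "Legendre D p = -1" using False nd unfolding Legendre_def by (simp add: cong_0_iff)
    then show ?thesis unfolding e by simp
  next
    case True
    then obtain y where y: "[y^2 = D] (mod p)" unfolding QuadRes_def by auto
    define z0 where "z0 = y mod p"
    have z0c: "[z0^2 = D] (mod p)" using y unfolding z0_def by (simp add: cong_def power_mod)
    have z0r: "0 \<le> z0" "z0 < p" unfolding z0_def using p_pos by auto
    have z0n: "z0 \<noteq> 0"
    proof
      assume "z0 = 0"
      then have "[0 = D] (mod p)" using z0c by simp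
      then show False using nd by (metis cong_0_iff cong_sym)
    qed
    have set: "{z\<in>{0..<p}. [z^2 = D] (mod p)} = {z0, p - z0}"
    proof (intro equalityI subsetI)
      fix z assume z: "z \<in> {z\<in>{0..<p}. [z^2 = D] (mod p)}"
      then have zc: "[z^2 = D] (mod p)" and zr: "0 \<le> z" "z < p" by auto
      have "[z^2 = z0^2] (mod p)" using cong_trans[OF zc cong_sym[OF z0c]] .
      then have "p dvd z^2 - z0^2" by (simp add: cong_iff_dvd_diff)
      moreover have "z^2 - z0^2 = (z - z0) * (z + z0)" by (simp add: power2_eq_square algebra_simps)
      ultimately have "p dvd (z - z0) * (z + z0)" by simp
      then have "p dvd (z - z0) \<or> p dvd (z + z0)" using prime_p by (simp add: prime_dvd_mult_iff)
      then show "z \<in> {z0, p - z0}"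
      proof
        assume "p dvd (z - z0)"
        then have "[z = z0] (mod p)" by (simp add: cong_iff_dvd_diff)
        then have "z = z0" using zr z0r mod_eq_range by blast
        then show ?thesis by simp
      next
        assume pz: "p dvd (z + z0)"
        have eq: "z - (p - z0) = (z + z0) - p" by simp
        have "p dvd (z - (p - z0))" unfolding eq using dvd_diff[OF pz dvd_refl] .
        then have "[z = p - z0] (mod p)" by (simp add: cong_iff_dvd_diff)
        moreover have "0 \<le> p - z0" "p - z0 < p" using z0r z0n by auto
        ultimately have "z = p - z0" using zr mod_eq_range by blast
        then show ?thesis by simp
      qed
    next
      fix z assume "z \<in> {z0, p - z0}"
      moreover have "[(p - z0)^2 = D] (mod p)"
      proof -
        have "(p - z0)^2 - z0^2 = p * (p - 2*z0)" by (simp add: power2_eq_square algebra_simps)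
        then have "[(p - z0)^2 = z0^2] (mod p)" by (rule cong_by_diff)
        then show ?thesis using z0c by (rule cong_trans)
      qed
      ultimately show "z \<in> {z\<in>{0..<p}. [z^2 = D] (mod p)}" using z0c z0r z0n by auto
    qed
    have "z0 \<noteq> p - z0"
    proof
      assume "z0 = p - z0"
      then have "p = 2 * z0" by simp
      then show False using prime_odd_int[OF prime_p p_gt2] by simp
    qed
    then have "card {z\<in>{0..<p}. [z^2 = D] (mod p)} = 2" unfolding set by simp
    moreover have "Legendre D p = 1" using True nd unfolding Legendre_def by (simp add: cong_0_iff)
    ultimately show ?thesis by simp
  qed
qed

lemma ndvd_2: "\<not> p dvd 2"
  using p_gt2 zdvd_not_zless[of 2 p] by simp

lemma ndvd_mult: "\<not> p dvd a \<Longrightarrow> \<not> p dvd b \<Longrightarrow> \<not> p dvd a * b"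
  using prime_p by (simp add: prime_dvd_mult_iff)

lemma quad_count:
  assumes A: "\<not> p dvd A"
  shows "int (card {y\<in>{0..<p}. [A*y^2 + B*y + C = 0] (mod p)}) = 1 + Legendre (B^2 - 4*A*C) p"
proof -
  define D where "D = B^2 - 4*A*C"
  define \<phi> where "\<phi> = (\<lambda>y. ((2*A)*y + B) mod p)"
  have n2A: "\<not> p dvd 2*A" using ndvd_mult[OF ndvd_2 A] .
  have n4A: "\<not> p dvd 4*A" using ndvd_mult[OF ndvd_2 n2A] by (simp add: mult.assoc[symmetric])
  have inj: "inj_on \<phi> {0..<p}" using lin_inj[OF n2A] unfolding \<phi>_def .
  have sub: "\<phi> ` {0..<p} \<subseteq> {0..<p}" unfolding \<phi>_def using p_pos by auto
  have img: "\<phi> ` {0..<p} = {0..<p}"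
    using card_subset_eq[OF _ sub] card_image[OF inj] by simp
  have key: "[A*y^2 + B*y + C = 0] (mod p) \<longleftrightarrow> [(\<phi> y)^2 = D] (mod p)" for y
  proof -
    have "[(\<phi> y)^2 = D] (mod p) \<longleftrightarrow> [((2*A)*y + B)^2 = D] (mod p)"
      unfolding \<phi>_def cong_def by (simp add: power_mod)
    also have "\<dots> \<longleftrightarrow> p dvd ((2*A)*y + B)^2 - D" by (simp add: cong_iff_dvd_diff)
    also have "((2*A)*y + B)^2 - D = (4*A) * (A*y^2 + B*y + C)"
      unfolding D_def by (simp add: power2_eq_square algebra_simps)
    also have "p dvd (4*A) * (A*y^2 + B*y + C) \<longleftrightarrow> p dvd (A*y^2 + B*y + C)"
      using n4A prime_p by (simp add: prime_dvd_mult_iff)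
    also have "\<dots> \<longleftrightarrow> [A*y^2 + B*y + C = 0] (mod p)" by (simp add: cong_0_iff)
    finally show ?thesis by simp
  qed
  have im2: "\<phi> ` {y\<in>{0..<p}. [A*y^2 + B*y + C = 0] (mod p)} = {z\<in>{0..<p}. [z^2 = D] (mod p)}"
  proof (intro equalityI subsetI)
    fix z assume "z \<in> \<phi> ` {y\<in>{0..<p}. [A*y^2 + B*y + C = 0] (mod p)}"
    then obtain y where y: "y \<in> {0..<p}" "[A*y^2 + B*y + C = 0] (mod p)" "z = \<phi> y" by auto
    moreover have "0 \<le> \<phi> y" "\<phi> y < p" unfolding \<phi>_def using p_pos by auto
    ultimately show "z \<in> {z\<in>{0..<p}. [z^2 = D] (mod p)}" using key by auto
  next
    fix z assume z: "z \<in> {z\<in>{0..<p}. [z^2 = D] (mod p)}"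
    then have "z \<in> \<phi> ` {0..<p}" using img by simp
    then obtain y where y: "y \<in> {0..<p}" "z = \<phi> y" by auto
    then show "z \<in> \<phi> ` {y\<in>{0..<p}. [A*y^2 + B*y + C = 0] (mod p)}" using key z by auto
  qed
  have "card {y\<in>{0..<p}. [A*y^2 + B*y + C = 0] (mod p)} = card {z\<in>{0..<p}. [z^2 = D] (mod p)}"
    unfolding im2[symmetric] by (rule card_image[symmetric]) (rule inj_on_subset[OF inj], auto)
  then show ?thesis using sqrt_count[of D] unfolding D_def by simp
qed

definition e3 where "e3 = (4 * k + 1) div 3"

lemma three_e3:
  assumes "[p = 2] (mod 3)"
  shows "3 * e3 = 4 * k + 1"
proof -
  have "(3::int) dvd p - 2" using assms by (simp add: cong_iff_dvd_diff)
  then obtain m where m: "p - 2 = 3 * m" by (auto elim: dvdE)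
  have "int (4 * k + 1) = 2 * (2 * int k) + 1" by simp
  also have "\<dots> = 3 * (2 * m + 1)" using m two_k by simp
  finally have "int (4 * k + 1) = int (3 * nat (2 * m + 1))" using p_gt2 m by simp
  then have e: "4 * k + 1 = 3 * nat (2 * m + 1)" by (simp only: of_nat_eq_iff)
  then show ?thesis unfolding e3_def by simp
qed

lemma cube_inv:
  assumes "[p = 2] (mod 3)" "\<not> p dvd x"
  shows "[(x^3)^e3 = x] (mod p)"
proof -
  have "(x^3)^e3 = x^(3*e3)" by (simp add: power_mult)
  also have "\<dots> = x^(2*k*2 + 1)" using three_e3[OF assms(1)] by simp
  also have "\<dots> = (x^(2*k))^2 * x" by (simp only: power_add power_mult power_one_right)
  also have "[(x^(2*k))^2 * x = 1^2 * x] (mod p)"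
    by (intro cong_mult cong_pow fermat_int assms(2) cong_refl)
  finally show ?thesis by simp
qed

lemma cube_inj:
  assumes "[p = 2] (mod 3)"
  shows "inj_on (\<lambda>x. x^3 mod p) {1..<p}"
proof (rule inj_onI)
  fix x y assume x: "x \<in> {1..<p}" and y: "y \<in> {1..<p}" and e: "x^3 mod p = y^3 mod p"
  have "[x^3 = y^3] (mod p)" using e by (simp add: cong_def)
  then have "[(x^3)^e3 = (y^3)^e3] (mod p)" by (rule cong_pow)
  then have "[x = y] (mod p)"
    using cube_inv[OF assms range_ndvd[OF x]] cube_inv[OF assms range_ndvd[OF y]]
    by (meson cong_sym cong_trans)
  then show "x = y" using x y mod_eq_range by auto
qed

lemma cube_img:
  assumes "[p = 2] (mod 3)"
  shows "(\<lambda>x. x^3 mod p) ` {1..<p} = {1..<p}"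
proof -
  have sub: "(\<lambda>x. x^3 mod p) ` {1..<p} \<subseteq> {1..<p}"
  proof
    fix z assume "z \<in> (\<lambda>x. x^3 mod p) ` {1..<p}"
    then obtain x where x: "x \<in> {1..<p}" "z = x^3 mod p" by auto
    have "\<not> p dvd x^3" using range_ndvd[OF x(1)] prime_p by (simp add: prime_dvd_power_iff)
    then have "z \<noteq> 0" using x(2) by (simp add: dvd_eq_mod_eq_0)
    moreover have "0 \<le> z" "z < p" using x(2) p_pos by auto
    ultimately show "z \<in> {1..<p}" by auto
  qed
  show ?thesis using card_subset_eq[OF _ sub] card_image[OF cube_inj[OF assms]] by simp
qed

lemma sum_cube:
  assumes "[p = 2] (mod 3)"
  shows "(\<Sum>x\<in>{1..<p}. Legendre (1 + 4*x^3) p) = -1"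
proof -
  have "(\<Sum>x\<in>{1..<p}. Legendre (1 + 4*x^3) p) = (\<Sum>x\<in>{1..<p}. (\<lambda>w. Legendre (4*w+1) p) (x^3 mod p))"
  proof (rule sum.cong[OF refl])
    fix x
    have "[4*(x^3 mod p)+1 = 4*x^3+1] (mod p)"
      by (intro cong_add cong_mult cong_refl) (simp add: cong_def)
    then show "Legendre (1 + 4*x^3) p = (\<lambda>w. Legendre (4*w+1) p) (x^3 mod p)"
      using leg_cong by (simp add: add.commute)
  qed
  also have "\<dots> = (\<Sum>w\<in>{1..<p}. Legendre (4*w+1) p)"
    by (rule sum_reindex_inj[OF _ cube_inj[OF assms]]) (use cube_img[OF assms] in auto)
  also have "\<dots> = (\<Sum>w\<in>{0..<p}. Legendre (4*w+1) p) - Legendre 1 p"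
    unfolding split0 by simp
  also have "(\<Sum>w\<in>{0..<p}. Legendre (4*w+1) p) = 0"
    by (rule sum_leg_lin) (use ndvd_mult[OF ndvd_2 ndvd_2] in simp)
  finally show ?thesis using leg_one by simp
qed

lemma cube_two:
  assumes "[p = 2] (mod 3)"
  shows "card {x\<in>{1..<p}. [x^3 = 2] (mod p)} = 1"
proof -
  have "2 \<in> {1..<p}" using p_gt2 by simp
  then have "2 \<in> (\<lambda>x. x^3 mod p) ` {1..<p}" using cube_img[OF assms] by simp
  then obtain x0 where x0': "x0 \<in> {1..<p}" "2 = x0^3 mod p" by (rule imageE)
  then have x0: "x0 \<in> {1..<p}" "x0^3 mod p = 2" by simp_all
  have "{x\<in>{1..<p}. [x^3 = 2] (mod p)} = {x0}"
  proof (intro equalityI subsetI)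
    fix x assume x: "x \<in> {x\<in>{1..<p}. [x^3 = 2] (mod p)}"
    then have "x^3 mod p = 2" using p_gt2 by (simp add: cong_def)
    then show "x \<in> {x0}" using cube_inj[OF assms] x x0 by (auto simp: inj_on_def)
  next
    fix x assume "x \<in> {x0}"
    then show "x \<in> {x\<in>{1..<p}. [x^3 = 2] (mod p)}" using x0 p_gt2 by (simp add: cong_def)
  qed
  then show ?thesis by simp
qed

lemma Pchar:
  assumes x: "x \<in> {1..<p}" and y: "y \<in> {1..<p}"
  shows "[x^2*(y^3+1) = y^2*(x^3+1)] (mod p) \<longleftrightarrow> x = y \<or> [x^2*y^2 = x+y] (mod p)"
proof -
  have "[x^2*(y^3+1) = y^2*(x^3+1)] (mod p) \<longleftrightarrow> p dvd x^2*(y^3+1) - y^2*(x^3+1)"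
    by (simp add: cong_iff_dvd_diff)
  also have "x^2*(y^3+1) - y^2*(x^3+1) = (x - y) * ((x + y) - x^2*y^2)"
    by (simp add: power2_eq_square power3_eq_cube algebra_simps)
  also have "p dvd (x - y) * ((x + y) - x^2*y^2) \<longleftrightarrow> p dvd (x - y) \<or> p dvd ((x + y) - x^2*y^2)"
    using prime_p by (simp add: prime_dvd_mult_iff)
  also have "p dvd (x - y) \<longleftrightarrow> x = y"
  proof
    assume "p dvd (x - y)"
    then have "[x = y] (mod p)" by (simp add: cong_iff_dvd_diff)
    then show "x = y" using x y mod_eq_range by auto
  qed simp
  also have "p dvd ((x + y) - x^2*y^2) \<longleftrightarrow> [x^2*y^2 = x+y] (mod p)"
    by (simp add: cong_iff_dvd_diff dvd_diff_commute)
  finally show ?thesis .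
qed

lemma row_count:
  assumes x: "x \<in> {1..<p}"
  shows "int (card {y\<in>{1..<p}. [x^2*y^2 = x+y] (mod p)}) = 1 + Legendre (1 + 4*x^3) p"
proof -
  have nx: "\<not> p dvd x^2" using range_ndvd[OF x] prime_p by (simp add: prime_dvd_power_iff)
  have ceq: "[x^2*y^2 + (-1)*y + (-x) = 0] (mod p) \<longleftrightarrow> [x^2*y^2 = x+y] (mod p)" for y
  proof -
    have "x^2*y^2 + (-1)*y + (-x) - 0 = x^2*y^2 - (x+y)" by simp
    then show ?thesis unfolding cong_iff_dvd_diff by (simp only:)
  qed
  have eq: "{y\<in>{1..<p}. [x^2*y^2 = x+y] (mod p)} = {y\<in>{0..<p}. [x^2*y^2 + (-1)*y + (-x) = 0] (mod p)}"
    unfolding ceq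
  proof (intro equalityI subsetI)
    fix y assume "y \<in> {y\<in>{1..<p}. [x^2*y^2 = x+y] (mod p)}"
    then show "y \<in> {y\<in>{0..<p}. [x^2*y^2 = x+y] (mod p)}"
      by simp
  next
    fix y assume y: "y \<in> {y\<in>{0..<p}. [x^2*y^2 = x+y] (mod p)}"
    have "y \<noteq> 0"
    proof
      assume "y = 0"
      then have "p dvd x" using y by (simp add: cong_iff_dvd_diff)
      then show False using range_ndvd[OF x] by simp
    qed
    then show "y \<in> {y\<in>{1..<p}. [x^2*y^2 = x+y] (mod p)}" using y
      by simp
  qed
  have disc: "(-1)^2 - 4 * x^2 * (-x) = 1 + 4*x^3" by (simp add: power2_eq_square power3_eq_cube)
  have q: "int (card {y\<in>{0..<p}. [x^2*y^2 + (-1)*y + (-x) = 0] (mod p)}) = 1 + Legendre ((-1)^2 - 4*x^2*(-x)) p"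
    by (rule quad_count[OF nx])
  show ?thesis unfolding eq using q unfolding disc .
qed

lemma count_N:
  assumes p3: "[p = 2] (mod 3)"
  shows "(\<Sum>x\<in>{1..<p}. \<Sum>y\<in>{1..<p}. of_bool ([x^2*(y^3+1) = y^2*(x^3+1)] (mod p)) :: int) = 2*p - 4"
proof -
  have row: "(\<Sum>y\<in>{1..<p}. of_bool ([x^2*(y^3+1) = y^2*(x^3+1)] (mod p)) :: int)
      = 2 + Legendre (1 + 4*x^3) p - of_bool ([x^3 = 2] (mod p))" if x: "x \<in> {1..<p}" for x
  proof -
    have "(\<Sum>y\<in>{1..<p}. of_bool ([x^2*(y^3+1) = y^2*(x^3+1)] (mod p)) :: int)
       = (\<Sum>y\<in>{1..<p}. (if y = x then 1 else 0) + of_bool ([x^2*y^2 = x+y] (mod p))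
             - (if y = x then of_bool ([x^2*x^2 = x+x] (mod p)) else 0))"
    proof (rule sum.cong[OF refl])
      fix y assume y: "y \<in> {1..<p}"
      show "(of_bool ([x^2*(y^3+1) = y^2*(x^3+1)] (mod p)) :: int)
         = (if y = x then 1 else 0) + of_bool ([x^2*y^2 = x+y] (mod p))
             - (if y = x then of_bool ([x^2*x^2 = x+x] (mod p)) else 0)"
        unfolding Pchar[OF x y] by auto
    qed
    also have "\<dots> = 1 + int (card {y\<in>{1..<p}. [x^2*y^2 = x+y] (mod p)}) - of_bool ([x^2*x^2 = x+x] (mod p))"
    proof -
      have "{1..<p} \<inter> {y. [x^2*y^2 = x+y] (mod p)} = {y\<in>{1..<p}. [x^2*y^2 = x+y] (mod p)}" by auto
      then show ?thesis using x by (simp add: sum.distrib sum_subtractf)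
    qed
    also have "[x^2*x^2 = x+x] (mod p) \<longleftrightarrow> [x^3 = 2] (mod p)"
    proof -
      have "[x^2*x^2 = x+x] (mod p) \<longleftrightarrow> p dvd x * (x^3 - 2)"
        by (simp add: cong_iff_dvd_diff power2_eq_square power3_eq_cube algebra_simps)
      also have "\<dots> \<longleftrightarrow> p dvd (x^3 - 2)"
        using range_ndvd[OF x] prime_p by (simp add: prime_dvd_mult_iff)
      also have "\<dots> \<longleftrightarrow> [x^3 = 2] (mod p)" by (simp add: cong_iff_dvd_diff)
      finally show ?thesis .
    qed
    finally show ?thesis using row_count[OF x] by simp
  qed
  have "(\<Sum>x\<in>{1..<p}. \<Sum>y\<in>{1..<p}. of_bool ([x^2*(y^3+1) = y^2*(x^3+1)] (mod p)) :: int)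
      = (\<Sum>x\<in>{1..<p}. 2 + Legendre (1 + 4*x^3) p - of_bool ([x^3 = 2] (mod p)))"
    using row by (rule sum.cong[OF refl])
  also have "\<dots> = 2 * (p - 1) + (\<Sum>x\<in>{1..<p}. Legendre (1 + 4*x^3) p) - (\<Sum>x\<in>{1..<p}. of_bool ([x^3 = 2] (mod p)))"
    using p_pos by (simp add: sum.distrib sum_subtractf)
  also have "(\<Sum>x\<in>{1..<p}. of_bool ([x^3 = 2] (mod p)) :: int) = 1"
  proof -
    have "{1..<p} \<inter> {x. [x^3 = 2] (mod p)} = {x\<in>{1..<p}. [x^3 = 2] (mod p)}" by auto
    then show ?thesis using cube_two[OF p3] by simp
  qed
  finally show ?thesis using sum_cube[OF p3] by simp
qed

lemma T_zero:
  assumes y: "y \<in> {1..<p}"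
  shows "(\<Sum>t\<in>{0..<p}. Legendre (1 * (y^3 + t*y^2 + 1)) p) = 0"
proof -
  have ny: "\<not> p dvd y^2" using range_ndvd[OF y] prime_p by (simp add: prime_dvd_power_iff)
  have "(\<Sum>t\<in>{0..<p}. Legendre (1 * (y^3 + t*y^2 + 1)) p) = (\<Sum>t\<in>{0..<p}. Legendre (y^2*t + (y^3+1)) p)"
    by (rule sum.cong[OF refl]) (simp add: algebra_simps)
  also have "\<dots> = 0" by (rule sum_leg_lin[OF ny])
  finally show ?thesis .
qed

lemma T_nz:
  assumes x: "x \<in> {1..<p}" and y: "y \<in> {1..<p}"
  shows "(\<Sum>t\<in>{0..<p}. Legendre ((x^3 + t*x^2 + 1) * (y^3 + t*y^2 + 1)) p)
       = p * of_bool ([x^2*(y^3+1) = y^2*(x^3+1)] (mod p)) - 1"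
proof -
  have nx: "\<not> p dvd x^2" using range_ndvd[OF x] prime_p by (simp add: prime_dvd_power_iff)
  have ny: "\<not> p dvd y^2" using range_ndvd[OF y] prime_p by (simp add: prime_dvd_power_iff)
  have nxy: "\<not> p dvd x*y" using ndvd_mult[OF range_ndvd[OF x] range_ndvd[OF y]] .
  have "(\<Sum>t\<in>{0..<p}. Legendre ((x^3 + t*x^2 + 1) * (y^3 + t*y^2 + 1)) p)
      = (\<Sum>t\<in>{0..<p}. Legendre ((x^2*t + (x^3+1)) * (y^2*t + (y^3+1))) p)"
    by (rule sum.cong[OF refl]) (simp add: algebra_simps)
  also have "\<dots> = Legendre (x^2*y^2) p * (if [x^2*(y^3+1) = y^2*(x^3+1)] (mod p) then p - 1 else -1)"
    by (rule two_lin[OF nx ny])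
  also have "Legendre (x^2*y^2) p = 1"
    using leg_sq[OF nxy] by (simp add: power_mult_distrib)
  finally show ?thesis by simp
qed

lemma main_loc:
  assumes p3: "[p = 2] (mod 3)"
  shows "(\<Sum>t\<in>{0..<p}. (a_coef p t)^2) = p^2 - p - 1"
proof -
  define G where "G = (\<lambda>t x y. Legendre ((x^3 + t*x^2 + 1) * (y^3 + t*y^2 + 1)) p)"
  define T where "T = (\<lambda>x y. \<Sum>t\<in>{0..<p}. G t x y)"
  define R where "R = {1..<p}"
  have sq: "(a_coef p t)^2 = (\<Sum>x\<in>{0..<p}. \<Sum>y\<in>{0..<p}. G t x y)" for t
  proof -
    have "(a_coef p t)^2 = (\<Sum>x\<in>{0..<p}. Legendre (x^3 + t*x^2 + 1) p) * (\<Sum>y\<in>{0..<p}. Legendre (y^3 + t*y^2 + 1) p)"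
      unfolding a_coef_def by (simp add: power2_eq_square)
    also have "\<dots> = (\<Sum>x\<in>{0..<p}. \<Sum>y\<in>{0..<p}. Legendre (x^3 + t*x^2 + 1) p * Legendre (y^3 + t*y^2 + 1) p)"
      by (rule sum_product)
    finally show ?thesis unfolding G_def leg_mult .
  qed
  have "(\<Sum>t\<in>{0..<p}. (a_coef p t)^2) = (\<Sum>t\<in>{0..<p}. \<Sum>x\<in>{0..<p}. \<Sum>y\<in>{0..<p}. G t x y)"
    using sq by simp
  also have "\<dots> = (\<Sum>x\<in>{0..<p}. \<Sum>t\<in>{0..<p}. \<Sum>y\<in>{0..<p}. G t x y)"
    by (rule sum.swap)
  also have "\<dots> = (\<Sum>x\<in>{0..<p}. \<Sum>y\<in>{0..<p}. T x y)"
    unfolding T_def by (rule sum.cong[OF refl]) (rule sum.swap)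
  also have "\<dots> = T 0 0 + (\<Sum>y\<in>R. T 0 y) + (\<Sum>x\<in>R. T x 0 + (\<Sum>y\<in>R. T x y))"
    unfolding split0 R_def by (simp add: sum.distrib)
  also have "T 0 0 = p" unfolding T_def G_def using p_pos by (simp add: leg_one)
  also have "(\<Sum>y\<in>R. T 0 y) = 0"
    unfolding T_def G_def R_def using T_zero by simp
  also have "(\<Sum>x\<in>R. T x 0 + (\<Sum>y\<in>R. T x y))
      = (\<Sum>x\<in>R. \<Sum>y\<in>R. p * of_bool ([x^2*(y^3+1) = y^2*(x^3+1)] (mod p)) - 1)"
  proof (rule sum.cong[OF refl])
    fix x assume x: "x \<in> R"
    have "T x 0 = 0" unfolding T_def G_def using T_zero[OF x[unfolded R_def]] by (simp add: mult.commute)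
    moreover have "T x y = p * of_bool ([x^2*(y^3+1) = y^2*(x^3+1)] (mod p)) - 1" if "y \<in> R" for y
      unfolding T_def G_def using T_nz x that unfolding R_def by blast
    ultimately show "T x 0 + (\<Sum>y\<in>R. T x y) = (\<Sum>y\<in>R. p * of_bool ([x^2*(y^3+1) = y^2*(x^3+1)] (mod p)) - 1)"
      by simp
  qed
  also have "\<dots> = p * (\<Sum>x\<in>R. \<Sum>y\<in>R. of_bool ([x^2*(y^3+1) = y^2*(x^3+1)] (mod p))) - (p-1)*(p-1)"
    unfolding R_def using p_pos by (simp add: sum_subtractf sum_distrib_left mult.commute)
  also have "(\<Sum>x\<in>R. \<Sum>y\<in>R. of_bool ([x^2*(y^3+1) = y^2*(x^3+1)] (mod p)) :: int) = 2*p - 4"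
    unfolding R_def by (rule count_N[OF p3])
  finally show ?thesis by (simp add: power2_eq_square algebra_simps)
qed

end

theorem mainTheorem3:
  fixes p :: int
  assumes "prime p" and "p > 2" and "[p = 2] (mod 3)"
  shows "(\<Sum>t\<in>{0..<p}. (a_coef p t)^2) = p^2 - p - 1"
proof -
  interpret oddprime p using assms(1,2) by unfold_locales
  show ?thesis using main_loc[OF assms(3)] .
qed

end
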